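(* In the setting of the context, suppose the parameters satisfy $$p>3L,\quad c<\frac1{p+L},\quad \alpha<\min\Big\{\frac1{11L},\frac{c^2(p-L)^2}{4L(1+c(p-L))^2}\Big\},\quad \beta<\min\Big\{\frac1{36},\frac{(p-L)^2}{384\alpha p(p+L)^2}\Big\}.$$ Then for every $t\ge0$ the iterates of Smoothed-GDA satisfy $$\phi^t-\phi^{t+1}\ge\frac1{8c}\|x^t-x^{t+1}\|^2+\frac1{8\alpha}\|y^t-y^t_+(z^t)\|^2+\frac{p}{8\beta}\|z^t-z^{t+1}\|^2-24p\beta\|x^*(z^t)-x(y^t_+(z^t),z^t)\|^2.$$
   Context: $X\subseteq\mathbb{R}^n$ nonempty closed convex, $Y\subseteq\mathbb{R}^m$ nonempty closed convex compact, $f:\mathbb{R}^n\times\mathbb{R}^m\to\mathbb{R}$ continuously differentiable with $f(x,\cdot)$ concave for each $x$; $\nabla_xf$ and $\nabla_yf$ are $L$-Lipschitz ($L>0$); $\psi(x)=\max_{y\in Y}f(x,y)$ is bounded below by a finite constant. $P_S$ denotes Euclidean projection onto $S$. $K(x,z;y)=f(x,y)+\frac p2\|x-z\|^2$ ($p>L$, so $K(\cdot,z;y)$ is strongly convex). Define $x(y,z)=\arg\min_{x\in X}K(x,z;y)$, $d(y,z)=\min_{x\in X}K(x,z;y)$, $P(z)=\min_{x\in X}\max_{y\in Y}K(x,z;y)$, $x^*(z)=\arg\min_{x\in X}\max_{y\in Y}K(x,z;y)$, and $\phi(x,y,z)=K(x,z;y)-2d(y,z)+2P(z)$. Smoothed-GDA: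 $x^{t+1}=P_X(x^t-c\nabla_xK(x^t,z^t;y^t))$, $y^{t+1}=P_Y(y^t+\alpha\nabla_yK(x^{t+1},z^t;y^t))$, $z^{t+1}=z^t+\beta(x^{t+1}-z^t)$. Set $\phi^t=\phi(x^t,y^t,z^t)$ and $y^t_+(z^t)=P_Y\big(y^t+\alpha\nabla_yK(x(y^t,z^t),z^t;y^t)\big)$. *)

theory Defs
  imports "HOL-Analysis.Analysis"
begin

definition Kfun :: "('a::euclidean_space \<Rightarrow> 'b::euclidean_space \<Rightarrow> real) \<Rightarrow> real \<Rightarrow> 'a \<Rightarrow> 'a \<Rightarrow> 'b \<Rightarrow> real"
  where "Kfun f p x z y = f x y + p / 2 * (norm (x - z))\<^sup>2"

definition xmin :: "('a::euclidean_space \<Rightarrow> 'b::euclidean_space \<Rightarrow> real) \<Rightarrow> real \<Rightarrow> 'a set \<Rightarrow> 'b \<Rightarrow> 'a \<Rightarrow> 'a"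
  where "xmin f p X y z = (THE x. x \<in> X \<and> (\<forall>x'\<in>X. Kfun f p x z y \<le> Kfun f p x' z y))"

definition dfun :: "('a::euclidean_space \<Rightarrow> 'b::euclidean_space \<Rightarrow> real) \<Rightarrow> real \<Rightarrow> 'a set \<Rightarrow> 'b \<Rightarrow> 'a \<Rightarrow> real"
  where "dfun f p X y z = (INF x\<in>X. Kfun f p x z y)"

definition Pfun :: "('a::euclidean_space \<Rightarrow> 'b::euclidean_space \<Rightarrow> real) \<Rightarrow> real \<Rightarrow> 'a set \<Rightarrow> 'b set \<Rightarrow> 'a \<Rightarrow> real"
  where "Pfun f p X Y z = (INF x\<in>X. SUP y\<in>Y. Kfun f p x z y)"

definition xstar :: "('a::euclidean_space \<Rightarrow> 'b::euclidean_space \<Rightarrow> real) \<Rightarrow> real \<Rightarrow> 'a set \<Rightarrow> 'b set \<Rightarrow> 'a \<Rightarrow> 'a"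
  where "xstar f p X Y z = (THE x. x \<in> X \<and>
            (\<forall>x'\<in>X. (SUP y\<in>Y. Kfun f p x z y) \<le> (SUP y\<in>Y. Kfun f p x' z y)))"

definition phifun :: "('a::euclidean_space \<Rightarrow> 'b::euclidean_space \<Rightarrow> real) \<Rightarrow> real \<Rightarrow> 'a set \<Rightarrow> 'b set \<Rightarrow> 'a \<Rightarrow> 'b \<Rightarrow> 'a \<Rightarrow> real"
  where "phifun f p X Y x y z = Kfun f p x z y - 2 * dfun f p X y z + 2 * Pfun f p X Y z"

end

theory Submission
  imports Defs
begin

lemma quad_upper:
  fixes F :: "'a::real_inner \<Rightarrow> real" and G :: "'a \<Rightarrow> 'a"
  assumes deriv: "\<And>x. (F has_derivative (\<lambda>h. G x \<bullet> h)) (at x)"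
    and mono: "\<And>u v. (G u - G v) \<bullet> (u - v) \<le> M * (norm (u - v))\<^sup>2"
  shows "F b \<le> F a + G a \<bullet> (b - a) + M / 2 * (norm (b - a))\<^sup>2"
proof -
  define d where "d = b - a"
  define \<phi> where "\<phi> t = F (a + t *\<^sub>R d) - t * (G a \<bullet> d) - M / 2 * t\<^sup>2 * (norm d)\<^sup>2" for t
  have der: "(\<phi> has_derivative (\<lambda>s. G (a + t *\<^sub>R d) \<bullet> (s *\<^sub>R d) - s * (G a \<bullet> d) - M / 2 * (2 * t * s) * (norm d)\<^sup>2)) (at t)" for t
  proof -
    have "((\<lambda>t. a + t *\<^sub>R d) has_derivative (\<lambda>s. s *\<^sub>R d)) (at t)"
      by (auto intro!: derivative_eq_intros)
    then have "((\<lambda>t. F (a + t *\<^sub>R d)) has_derivative (\<lambda>s. G (a + t *\<^sub>R d) \<bullet> (s *\<^sub>R d))) (at t)"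
      using has_derivative_compose[OF _ deriv] by blast
    then show ?thesis unfolding \<phi>_def
      by (auto intro!: derivative_eq_intros)
  qed
  have cont: "continuous_on {0..1} \<phi>"
    using der by (meson continuous_at_imp_continuous_on has_derivative_continuous)
  obtain \<xi> where \<xi>: "0 < \<xi>" "\<xi> < 1"
    "\<phi> 1 - \<phi> 0 = G (a + \<xi> *\<^sub>R d) \<bullet> ((1 - 0) *\<^sub>R d) - (1 - 0) * (G a \<bullet> d) - M / 2 * (2 * \<xi> * (1 - 0)) * (norm d)\<^sup>2"
    using mvt[OF zero_less_one cont der] by auto
  have "(G (a + \<xi> *\<^sub>R d) - G a) \<bullet> ((a + \<xi> *\<^sub>R d) - a) \<le> M * (norm ((a + \<xi> *\<^sub>R d) - a))\<^sup>2"
    by (rule mono)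
  then have "\<xi> * ((G (a + \<xi> *\<^sub>R d) - G a) \<bullet> d) \<le> \<xi> * (M * \<xi> * (norm d)\<^sup>2)"
    using \<xi> by (simp add: power2_eq_square algebra_simps)
  then have "(G (a + \<xi> *\<^sub>R d) - G a) \<bullet> d \<le> M * \<xi> * (norm d)\<^sup>2"
    using \<xi> by simp
  then have "\<phi> 1 \<le> \<phi> 0" using \<xi> by (simp add: inner_diff_left algebra_simps)
  then show ?thesis unfolding \<phi>_def d_def by (simp add: algebra_simps)
qed

lemma quad_lower:
  fixes F :: "'a::real_inner \<Rightarrow> real" and G :: "'a \<Rightarrow> 'a"
  assumes deriv: "\<And>x. (F has_derivative (\<lambda>h. G x \<bullet> h)) (at x)"
    and mono: "\<And>u v. m * (norm (u - v))\<^sup>2 \<le> (G u - G v) \<bullet> (u - v)"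
  shows "F a + G a \<bullet> (b - a) + m / 2 * (norm (b - a))\<^sup>2 \<le> F b"
proof -
  have d: "((\<lambda>x. - F x) has_derivative (\<lambda>h. (- G x) \<bullet> h)) (at x)" for x
    using has_derivative_minus[OF deriv[of x]] by simp
  have mm: "(- G u - - G v) \<bullet> (u - v) \<le> (-m) * (norm (u - v))\<^sup>2" for u v
    using mono[of u v] by (simp add: inner_diff_left)
  have "- F b \<le> - F a + (- G a) \<bullet> (b - a) + (-m) / 2 * (norm (b - a))\<^sup>2"
    by (rule quad_upper[of "\<lambda>x. - F x" "\<lambda>x. - G x", OF d mm])
  then show ?thesis by (simp add: inner_minus_left)
qed

lemma strong_conv_ineq:
  fixes F :: "'a::real_inner \<Rightarrow> real" and G :: "'a \<Rightarrow> 'a"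
  assumes lower: "\<And>a b. F a + G a \<bullet> (b - a) + m / 2 * (norm (b - a))\<^sup>2 \<le> F b"
    and t: "0 \<le> t" "t \<le> 1"
  shows "F (t *\<^sub>R a + (1 - t) *\<^sub>R b) \<le> t * F a + (1 - t) * F b - m / 2 * (t * (1 - t)) * (norm (a - b))\<^sup>2"
proof -
  define c where "c = t *\<^sub>R a + (1 - t) *\<^sub>R b"
  have ea: "a - c = (1 - t) *\<^sub>R (a - b)" unfolding c_def by (simp add: algebra_simps)
  have eb: "b - c = (- t) *\<^sub>R (a - b)" unfolding c_def by (simp add: algebra_simps)
  have 1: "F c + (1 - t) * (G c \<bullet> (a - b)) + m / 2 * (1 - t)\<^sup>2 * (norm (a - b))\<^sup>2 \<le> F a"
    using lower[of c a] unfolding ea by (simp add: power_mult_distrib)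
  have 2: "F c - t * (G c \<bullet> (a - b)) + m / 2 * t\<^sup>2 * (norm (a - b))\<^sup>2 \<le> F b"
    using lower[of c b] unfolding eb by (simp add: power_mult_distrib)
  have "t * (F c + (1 - t) * (G c \<bullet> (a - b)) + m / 2 * (1 - t)\<^sup>2 * (norm (a - b))\<^sup>2)
        + (1 - t) * (F c - t * (G c \<bullet> (a - b)) + m / 2 * t\<^sup>2 * (norm (a - b))\<^sup>2) \<le> t * F a + (1 - t) * F b"
    using mult_left_mono[OF 1 t(1)] mult_left_mono[OF 2, of "1 - t"] t by linarith
  moreover have "t * (F c + (1 - t) * (G c \<bullet> (a - b)) + m / 2 * (1 - t)\<^sup>2 * (norm (a - b))\<^sup>2)
        + (1 - t) * (F c - t * (G c \<bullet> (a - b)) + m / 2 * t\<^sup>2 * (norm (a - b))\<^sup>2)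
        = F c + m / 2 * (t * (1 - t)) * (norm (a - b))\<^sup>2"
    by (simp add: power2_eq_square field_simps)
  ultimately show ?thesis unfolding c_def[symmetric] by linarith
qed

lemma coercive_min:
  fixes F :: "'a::euclidean_space \<Rightarrow> real"
  assumes X: "closed X" "x0 \<in> X" and cont: "continuous_on UNIV F"
    and m: "m > 0" and low: "\<And>x. x \<in> X \<Longrightarrow> A + gg \<bullet> (x - x0) + m / 2 * (norm (x - x0))\<^sup>2 \<le> F x"
  shows "\<exists>x\<in>X. \<forall>w\<in>X. F x \<le> F w"
proof -
  define S where "S = X \<inter> {x. F x \<le> F x0}"
  define C where "C = F x0 - A"
  have C: "C \<ge> 0" using low[OF X(2)] unfolding C_def by simp
  define R where "R = 2 * (norm gg + C) / m + 1"
  have "S \<subseteq> cball x0 R"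
  proof
    fix x assume x: "x \<in> S"
    show "x \<in> cball x0 R"
    proof (rule ccontr)
      assume "x \<notin> cball x0 R"
      then have r: "norm (x - x0) > R" by (simp add: dist_norm norm_minus_commute)
      define r where "r = norm (x - x0)"
      have R1: "R \<ge> 1" unfolding R_def using C m by (simp add: field_simps)
      have "m / 2 * r > norm gg + C" using r m unfolding r_def R_def by (simp add: field_simps)
      then have "m / 2 * r * r > (norm gg + C) * r" using r R1 unfolding r_def
        by (intro mult_strict_right_mono) auto
      moreover have "gg \<bullet> (x - x0) \<ge> - (norm gg * r)" unfolding r_def
        using norm_cauchy_schwarz[of "-gg" "x - x0"] by simp
      moreover have "A + gg \<bullet> (x - x0) + m / 2 * r\<^sup>2 \<le> F x" using low x S_def r_def by auto
      moreover have "F x \<le> F x0" using x S_def by auto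
      moreover have "C * r \<ge> C" using C R1 r unfolding r_def
        by (metis less_le_not_le mult_le_cancel_left1 order.trans)
      ultimately show False unfolding C_def power2_eq_square by (simp add: algebra_simps)
    qed
  qed
  then have "bounded S" using bounded_cball bounded_subset by blast
  moreover have "closed S" unfolding S_def
    using X(1) closed_Collect_le[OF cont continuous_on_const] by (intro closed_Int) auto
  ultimately have "compact S" using compact_eq_bounded_closed by blast
  moreover have "S \<noteq> {}" using X(2) S_def by auto
  ultimately obtain x where x: "x \<in> S" "\<forall>w\<in>S. F x \<le> F w"
    using continuous_attains_inf[of S F] cont continuous_on_subset by blast
  have "\<forall>w\<in>X. F x \<le> F w"
  proof
    fix w assume w: "w \<in> X"
    show "F x \<le> F w"
    proof (cases "F w \<le> F x0")
      case True then show ?thesis using x w S_def by auto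
    next
      case False then show ?thesis using x S_def by auto
    qed
  qed
  then show ?thesis using x S_def by auto
qed

lemma SUP_shift:
  fixes h :: "'b \<Rightarrow> real"
  assumes "Y \<noteq> {}" "bdd_above (h ` Y)"
  shows "(SUP y\<in>Y. h y + k) = (SUP y\<in>Y. h y) + k"
proof (rule antisym)
  show "(SUP y\<in>Y. h y + k) \<le> (SUP y\<in>Y. h y) + k"
    using assms by (intro cSUP_least) (auto intro: cSUP_upper)
next
  have "bdd_above ((\<lambda>y. h y + k) ` Y)" using assms(2) unfolding bdd_above_def by (auto, meson add_right_mono)
  then have "(SUP y\<in>Y. h y) \<le> (SUP y\<in>Y. h y + k) - k"
    using assms by (intro cSUP_least) (auto intro: cSUP_upper2 simp: le_diff_eq)
  then show "(SUP y\<in>Y. h y) + k \<le> (SUP y\<in>Y. h y + k)" by simp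
qed

lemma INF_min:
  fixes h :: "'a \<Rightarrow> real"
  assumes "x0 \<in> X" "\<forall>x\<in>X. h x0 \<le> h x"
  shows "(INF x\<in>X. h x) = h x0"
  using assms by (intro cInf_eq_minimum) auto

lemma vi_perturb:
  fixes u v a b :: "'a::real_inner"
  assumes "a \<bullet> (v - u) \<ge> 0" "b \<bullet> (u - v) \<ge> 0"
    and "\<mu> * (norm (u - v))\<^sup>2 \<le> (b' - b) \<bullet> (u - v)"
    and "norm (b' - a) \<le> C" and "\<mu> > 0"
  shows "norm (u - v) \<le> C / \<mu>"
proof -
  have "(b' - b) \<bullet> (u - v) = (b' - a) \<bullet> (u - v) - a \<bullet> (v - u) - b \<bullet> (u - v)"
    by (simp add: inner_diff_left inner_diff_right)
  also have "\<dots> \<le> (b' - a) \<bullet> (u - v)" using assms by simp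
  also have "\<dots> \<le> norm (b' - a) * norm (u - v)" by (rule norm_cauchy_schwarz)
  also have "\<dots> \<le> C * norm (u - v)" using assms(4) by (simp add: mult_right_mono)
  finally have "\<mu> * norm (u - v) * norm (u - v) \<le> C * norm (u - v)"
    using assms(3) by (simp add: power2_eq_square mult.assoc)
  then have "\<mu> * norm (u - v) \<le> C" if "u \<noteq> v" using that by simp
  then show ?thesis using assms(5) assms(4)
    by (cases "u = v") (auto simp: field_simps intro: order.trans[OF norm_ge_zero])
qed

locale sgda =
  fixes f :: "'a::euclidean_space \<Rightarrow> 'b::euclidean_space \<Rightarrow> real"
    and gx :: "'a \<Rightarrow> 'b \<Rightarrow> 'a" and gy :: "'a \<Rightarrow> 'b \<Rightarrow> 'b"
    and X :: "'a set" and Y :: "'b set" and L p :: real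
  assumes X: "X \<noteq> {}" "closed X" "convex X"
    and Y: "Y \<noteq> {}" "compact Y" "convex Y"
    and deriv: "\<And>x y. (case_prod f has_derivative (\<lambda>(h, k). gx x y \<bullet> h + gy x y \<bullet> k)) (at (x, y))"
    and concave: "\<And>x. concave_on UNIV (f x)"
    and Lpos: "L > 0"
    and Lip_x: "\<And>x y x' y'. norm (gx x y - gx x' y') \<le> L * norm ((x, y) - (x', y'))"
    and Lip_y: "\<And>x y x' y'. norm (gy x y - gy x' y') \<le> L * norm ((x, y) - (x', y'))"
    and p3: "p > 3 * L"
begin

definition G :: "'b \<Rightarrow> 'a \<Rightarrow> 'a \<Rightarrow> 'a" where "G y z x = gx x y + p *\<^sub>R (x - z)"

lemma Lipx2: "norm (gx x y - gx x' y') \<le> L * norm (x - x') + L * norm (y - y')"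
proof -
  have "norm ((x, y) - (x', y')) \<le> norm (x - x') + norm (y - y')"
    using norm_Pair_le[of "x - x'" "y - y'"] by simp
  then have "L * norm ((x, y) - (x', y')) \<le> L * (norm (x - x') + norm (y - y'))"
    using Lpos by (intro mult_left_mono) auto
  then show ?thesis using Lip_x[of x y x' y'] by (simp add: distrib_left)
qed

lemma Lipy2: "norm (gy x y - gy x' y') \<le> L * norm (x - x') + L * norm (y - y')"
proof -
  have "norm ((x, y) - (x', y')) \<le> norm (x - x') + norm (y - y')"
    using norm_Pair_le[of "x - x'" "y - y'"] by simp
  then have "L * norm ((x, y) - (x', y')) \<le> L * (norm (x - x') + norm (y - y'))"
    using Lpos by (intro mult_left_mono) auto
  then show ?thesis using Lip_y[of x y x' y'] by (simp add: distrib_left)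
qed

lemma fy_deriv: "((\<lambda>y. f x y) has_derivative (\<lambda>k. gy x y \<bullet> k)) (at y)"
proof -
  have "((\<lambda>y. (x, y)) has_derivative (\<lambda>k. (0, k))) (at y)"
    by (auto intro!: derivative_eq_intros)
  from has_derivative_compose[OF this deriv[of x y]] show ?thesis by simp
qed

lemma fx_deriv: "((\<lambda>x. f x y) has_derivative (\<lambda>h. gx x y \<bullet> h)) (at x)"
proof -
  have "((\<lambda>x. (x, y)) has_derivative (\<lambda>h. (h, 0))) (at x)"
    by (auto intro!: derivative_eq_intros)
  from has_derivative_compose[OF this deriv[of x y]] show ?thesis by simp
qed

lemma K_deriv: "((\<lambda>x. Kfun f p x z y) has_derivative (\<lambda>h. G y z x \<bullet> h)) (at x)"
proof -
  have e: "Kfun f p x z y = f x y + p / 2 * ((x - z) \<bullet> (x - z))" for x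
    unfolding Kfun_def by (simp add: power2_norm_eq_inner)
  have "((\<lambda>x. f x y + p / 2 * ((x - z) \<bullet> (x - z))) has_derivative
      (\<lambda>h. gx x y \<bullet> h + p / 2 * (h \<bullet> (x - z) + (x - z) \<bullet> h))) (at x)"
    by (auto intro!: derivative_eq_intros fx_deriv)
  moreover have "(\<lambda>h. gx x y \<bullet> h + p / 2 * (h \<bullet> (x - z) + (x - z) \<bullet> h)) = (\<lambda>h. G y z x \<bullet> h)"
    unfolding G_def by (auto simp: inner_add_left inner_commute algebra_simps)
  ultimately show ?thesis unfolding e by simp
qed

lemma G_lip: "norm (G y z u - G y z v) \<le> (p + L) * norm (u - v)"
proof -
  have "G y z u - G y z v = (gx u y - gx v y) + p *\<^sub>R (u - v)"
    unfolding G_def by (simp add: algebra_simps)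
  then have "norm (G y z u - G y z v) \<le> norm (gx u y - gx v y) + p * norm (u - v)"
    using norm_triangle_ineq[of "gx u y - gx v y" "p *\<^sub>R (u - v)"] p3 Lpos by simp
  also have "\<dots> \<le> L * norm (u - v) + p * norm (u - v)" using Lipx2[of u y v y] by simp
  finally show ?thesis by (simp add: algebra_simps)
qed

lemma G_upper: "(G y z u - G y z v) \<bullet> (u - v) \<le> (p + L) * (norm (u - v))\<^sup>2"
proof -
  have "(G y z u - G y z v) \<bullet> (u - v) \<le> norm (G y z u - G y z v) * norm (u - v)"
    by (rule norm_cauchy_schwarz)
  also have "\<dots> \<le> (p + L) * norm (u - v) * norm (u - v)"
    by (rule mult_right_mono[OF G_lip norm_ge_zero])
  finally show ?thesis by (simp add: power2_eq_square mult.assoc)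
qed

lemma G_lower: "(p - L) * (norm (u - v))\<^sup>2 \<le> (G y z u - G y z v) \<bullet> (u - v)"
proof -
  have "(G y z u - G y z v) \<bullet> (u - v) = (gx u y - gx v y) \<bullet> (u - v) + p * (norm (u - v))\<^sup>2"
    unfolding G_def by (simp add: algebra_simps inner_diff_left power2_norm_eq_inner inner_add_left)
  moreover have "- ((gx u y - gx v y) \<bullet> (u - v)) \<le> L * (norm (u - v))\<^sup>2"
  proof -
    have "- ((gx u y - gx v y) \<bullet> (u - v)) \<le> norm (gx u y - gx v y) * norm (u - v)"
      using abs_ge_minus_self[of "(gx u y - gx v y) \<bullet> (u - v)"] Cauchy_Schwarz_ineq2[of "gx u y - gx v y" "u - v"] by linarith
    also have "\<dots> \<le> L * norm (u - v) * norm (u - v)"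
      using Lipx2[of u y v y] by (simp add: mult_right_mono)
    finally show ?thesis by (simp add: power2_eq_square mult.assoc)
  qed
  ultimately show ?thesis by (simp add: algebra_simps)
qed

lemma K_upper: "Kfun f p b z y \<le> Kfun f p a z y + G y z a \<bullet> (b - a) + (p + L) / 2 * (norm (b - a))\<^sup>2"
  by (rule quad_upper[OF K_deriv G_upper])

lemma K_lower: "Kfun f p a z y + G y z a \<bullet> (b - a) + (p - L) / 2 * (norm (b - a))\<^sup>2 \<le> Kfun f p b z y"
  by (rule quad_lower[OF K_deriv G_lower])

lemma K_strong: "0 \<le> t \<Longrightarrow> t \<le> 1 \<Longrightarrow> Kfun f p (t *\<^sub>R a + (1 - t) *\<^sub>R b) z y
   \<le> t * Kfun f p a z y + (1 - t) * Kfun f p b z y - (p - L) / 2 * (t * (1 - t)) * (norm (a - b))\<^sup>2"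
  by (rule strong_conv_ineq[OF K_lower])

lemma f_tangent: "f x y' \<le> f x y + gy x y \<bullet> (y' - y)"
proof -
  define d where "d = y' - y"
  define h where "h t = - f x (y + t *\<^sub>R d)" for t
  have cv: "convex_on UNIV h"
  proof (rule convex_onI)
    fix t s1 s2 :: real assume t: "0 < t" "t < 1"
    have e: "y + ((1 - t) *\<^sub>R s1 + t *\<^sub>R s2) *\<^sub>R d = (1 - t) *\<^sub>R (y + s1 *\<^sub>R d) + t *\<^sub>R (y + s2 *\<^sub>R d)"
      by (simp add: algebra_simps)
    have "(1 - t) * f x (y + s1 *\<^sub>R d) + t * f x (y + s2 *\<^sub>R d) \<le> f x ((1 - t) *\<^sub>R (y + s1 *\<^sub>R d) + t *\<^sub>R (y + s2 *\<^sub>R d))"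
      using concave_onD[OF concave[of x], of t] t by simp
    then show "h ((1 - t) *\<^sub>R s1 + t *\<^sub>R s2) \<le> (1 - t) * h s1 + t * h s2"
      unfolding h_def e by simp
  qed simp
  have "((\<lambda>t. y + t *\<^sub>R d) has_derivative (\<lambda>s. s *\<^sub>R d)) (at 0)"
    by (auto intro!: derivative_eq_intros)
  from has_derivative_compose[OF this fy_deriv]
  have "((\<lambda>t. f x (y + t *\<^sub>R d)) has_derivative (\<lambda>s. gy x y \<bullet> (s *\<^sub>R d))) (at 0)" by simp
  then have "(h has_derivative (\<lambda>s. s * (- (gy x y \<bullet> d)))) (at 0)"
    unfolding h_def by (auto intro!: derivative_eq_intros simp: algebra_simps)
  then have "(h has_field_derivative (- (gy x y \<bullet> d))) (at 0 within UNIV)"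
    unfolding has_field_derivative_def by (rule has_derivative_eq_rhs) (auto simp: fun_eq_iff)
  note tg = convex_on_imp_above_tangent[OF cv _ _ _ this]
  have "h 1 - h 0 \<ge> - (gy x y \<bullet> d) * (1 - 0)" using tg[of 1] by simp
  then show ?thesis unfolding h_def d_def by simp
qed

end

context sgda begin

lemma mu_pos: "p - L > 0" using p3 Lpos by simp

lemma K_cont: "continuous_on UNIV (\<lambda>x. Kfun f p x z y)"
  using K_deriv by (meson continuous_at_imp_continuous_on has_derivative_continuous)

lemma Ky_cont: "continuous_on UNIV (\<lambda>y. Kfun f p x z y)"
proof -
  have "continuous_on UNIV (\<lambda>y. f x y)"
    using fy_deriv by (meson continuous_at_imp_continuous_on has_derivative_continuous)
  then show ?thesis unfolding Kfun_def by (intro continuous_intros)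
qed

lemma K_bdd: "bdd_above ((\<lambda>y. Kfun f p x z y) ` Y)"
proof -
  have "compact ((\<lambda>y. Kfun f p x z y) ` Y)"
    using Y(2) continuous_on_subset[OF Ky_cont subset_UNIV] by (intro compact_continuous_image) auto
  then show ?thesis by (intro bounded_imp_bdd_above compact_imp_bounded)
qed

lemma unique_min_strong:
  fixes F :: "'a \<Rightarrow> real"
  assumes strong: "\<And>a b. F ((1/2) *\<^sub>R a + (1/2) *\<^sub>R b) \<le> (1/2) * F a + (1/2) * F b - (p - L) / 8 * (norm (a - b))\<^sup>2"
    and a: "a \<in> X" "\<forall>w\<in>X. F a \<le> F w" and b: "b \<in> X" "\<forall>w\<in>X. F b \<le> F w"
  shows "a = b"
proof (rule ccontr)
  assume ne: "a \<noteq> b"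
  have m: "(1/2) *\<^sub>R a + (1/2) *\<^sub>R b \<in> X"
    using X(3) a b unfolding convex_def by auto
  have "F a \<le> F b" "F b \<le> F a" using a b by auto
  moreover have "(p - L) / 8 * (norm (a - b))\<^sup>2 > 0"
    using ne mu_pos by simp
  moreover have "F a \<le> F ((1/2) *\<^sub>R a + (1/2) *\<^sub>R b)" using a m by blast
  ultimately show False using strong[of a b] by linarith
qed

lemma K_strong_half: "Kfun f p ((1/2) *\<^sub>R a + (1/2) *\<^sub>R b) z y \<le> (1/2) * Kfun f p a z y + (1/2) * Kfun f p b z y - (p - L) / 8 * (norm (a - b))\<^sup>2"
  using K_strong[of "1/2" a b z y] by simp

lemma xmin_ex1: "\<exists>!x. x \<in> X \<and> (\<forall>x'\<in>X. Kfun f p x z y \<le> Kfun f p x' z y)"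
proof -
  obtain x0 where x0: "x0 \<in> X" using X(1) by auto
  have "\<exists>x\<in>X. \<forall>w\<in>X. Kfun f p x z y \<le> Kfun f p w z y"
    by (rule coercive_min[OF X(2) x0 K_cont mu_pos, where A="Kfun f p x0 z y" and gg="G y z x0"])
       (use K_lower in \<open>simp add: field_simps\<close>)
  moreover have "a = b" if "a \<in> X \<and> (\<forall>x'\<in>X. Kfun f p a z y \<le> Kfun f p x' z y)"
    "b \<in> X \<and> (\<forall>x'\<in>X. Kfun f p b z y \<le> Kfun f p x' z y)" for a b
    using that by (intro unique_min_strong[of "\<lambda>x. Kfun f p x z y"] K_strong_half) auto
  ultimately show ?thesis by blast
qed

lemma xmin_char: "xmin f p X y z \<in> X" "\<forall>w\<in>X. Kfun f p (xmin f p X y z) z y \<le> Kfun f p w z y"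
  using theI'[OF xmin_ex1[of z y]] unfolding xmin_def by auto

lemma d_eq: "dfun f p X y z = Kfun f p (xmin f p X y z) z y"
  unfolding dfun_def using xmin_char by (intro INF_min) auto

lemma d_le: "w \<in> X \<Longrightarrow> dfun f p X y z \<le> Kfun f p w z y"
  using d_eq xmin_char by auto

lemma min_vi:
  fixes F :: "'a \<Rightarrow> real"
  assumes upper: "\<And>a b. F b \<le> F a + Gr a \<bullet> (b - a) + M / 2 * (norm (b - a))\<^sup>2"
    and M: "M > 0"
    and v: "v \<in> X" "\<forall>w\<in>X. F v \<le> F w" and w: "w \<in> X"
  shows "Gr v \<bullet> (w - v) \<ge> 0"
proof (rule ccontr)
  assume "\<not> ?thesis"
  then have neg: "Gr v \<bullet> (w - v) < 0" by simp
  define \<delta> where "\<delta> = - (Gr v \<bullet> (w - v))"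
  define n where "n = (norm (w - v))\<^sup>2"
  have \<delta>: "\<delta> > 0" using neg \<delta>_def by simp
  have "w \<noteq> v" using neg by auto
  then have n: "n > 0" unfolding n_def by simp
  define t where "t = min 1 (\<delta> / (M * n))"
  have t: "0 < t" "t \<le> 1" "t \<le> \<delta> / (M * n)" using \<delta> n M unfolding t_def by auto
  have tMn: "t * (M * n) \<le> \<delta>" using t(3) n M by (simp add: field_simps)
  have mem: "v + t *\<^sub>R (w - v) \<in> X"
  proof -
    have "v + t *\<^sub>R (w - v) = (1 - t) *\<^sub>R v + t *\<^sub>R w" by (simp add: algebra_simps)
    then show ?thesis using X(3) v w t unfolding convex_def by auto
  qed
  have "F (v + t *\<^sub>R (w - v)) \<le> F v + Gr v \<bullet> (t *\<^sub>R (w - v)) + M / 2 * (norm (t *\<^sub>R (w - v)))\<^sup>2"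
    using upper[of "v + t *\<^sub>R (w - v)" v] by simp
  also have "\<dots> = F v - t * \<delta> + t * (t * (M * n)) / 2"
    unfolding \<delta>_def n_def using t by (simp add: power_mult_distrib power2_eq_square)
  also have "\<dots> < F v"
  proof -
    have "t * (t * (M * n)) \<le> t * \<delta>" using tMn t by (simp add: mult_left_mono)
    moreover have "t * \<delta> > 0" using t \<delta> by simp
    ultimately show ?thesis by linarith
  qed
  finally show False using v mem by force
qed

lemma xmin_vi: "w \<in> X \<Longrightarrow> G y z (xmin f p X y z) \<bullet> (w - xmin f p X y z) \<ge> 0"
  by (rule min_vi[OF K_upper _ xmin_char]) (use p3 Lpos in auto)

end

context sgda begin

definition gs :: "'a \<Rightarrow> 'a \<Rightarrow> real" where "gs z x = (SUP y\<in>Y. Kfun f p x z y)"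

lemma gs_ge: "y \<in> Y \<Longrightarrow> Kfun f p x z y \<le> gs z x"
  unfolding gs_def by (rule cSUP_upper[OF _ K_bdd])

lemma gs_strong:
  assumes t: "0 \<le> t" "t \<le> 1"
  shows "gs z (t *\<^sub>R a + (1 - t) *\<^sub>R b) \<le> t * gs z a + (1 - t) * gs z b - (p - L) / 2 * (t * (1 - t)) * (norm (a - b))\<^sup>2"
  unfolding gs_def[of z "t *\<^sub>R a + (1 - t) *\<^sub>R b"]
proof (rule cSUP_least[OF Y(1)])
  fix y assume y: "y \<in> Y"
  have "t * Kfun f p a z y \<le> t * gs z a" using gs_ge[OF y] t by (simp add: mult_left_mono)
  moreover have "(1 - t) * Kfun f p b z y \<le> (1 - t) * gs z b" using gs_ge[OF y] t by (simp add: mult_left_mono)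
  ultimately show "Kfun f p (t *\<^sub>R a + (1 - t) *\<^sub>R b) z y \<le> t * gs z a + (1 - t) * gs z b - (p - L) / 2 * (t * (1 - t)) * (norm (a - b))\<^sup>2"
    using K_strong[OF t, of a b z y] by linarith
qed

lemma gs_convex: "convex_on UNIV (gs z)"
proof (rule convex_onI)
  fix t :: real and a b :: 'a assume t: "0 < t" "t < 1"
  have "gs z ((1 - t) *\<^sub>R a + (1 - (1 - t)) *\<^sub>R b) \<le> (1 - t) * gs z a + (1 - (1 - t)) * gs z b - (p - L) / 2 * ((1 - t) * (1 - (1 - t))) * (norm (a - b))\<^sup>2"
    using t by (intro gs_strong) auto
  moreover have "(p - L) / 2 * ((1 - t) * (1 - (1 - t))) * (norm (a - b))\<^sup>2 \<ge> 0"
    using t mu_pos by simp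
  ultimately show "gs z ((1 - t) *\<^sub>R a + t *\<^sub>R b) \<le> (1 - t) * gs z a + t * gs z b" by simp
qed simp

lemma gs_cont: "continuous_on UNIV (gs z)"
  by (rule convex_on_continuous[OF open_UNIV gs_convex])

lemma xstar_ex1: "\<exists>!x. x \<in> X \<and> (\<forall>x'\<in>X. gs z x \<le> gs z x')"
proof -
  obtain x0 where x0: "x0 \<in> X" using X(1) by auto
  obtain y0 where y0: "y0 \<in> Y" using Y(1) by auto
  have "\<exists>x\<in>X. \<forall>w\<in>X. gs z x \<le> gs z w"
  proof (rule coercive_min[OF X(2) x0 gs_cont mu_pos, where A="Kfun f p x0 z y0" and gg="G y0 z x0"])
    fix x
    show "Kfun f p x0 z y0 + G y0 z x0 \<bullet> (x - x0) + (p - L) / 2 * (norm (x - x0))\<^sup>2 \<le> gs z x"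
      using K_lower[of x0 z y0 x] gs_ge[OF y0, of x z] by linarith
  qed
  moreover have "a = b" if "a \<in> X \<and> (\<forall>x'\<in>X. gs z a \<le> gs z x')"
    "b \<in> X \<and> (\<forall>x'\<in>X. gs z b \<le> gs z x')" for a b
  proof (rule unique_min_strong[of "gs z"])
    fix a b
    show "gs z ((1/2) *\<^sub>R a + (1/2) *\<^sub>R b) \<le> (1/2) * gs z a + (1/2) * gs z b - (p - L) / 8 * (norm (a - b))\<^sup>2"
      using gs_strong[of "1/2" z a b] by simp
  qed (use that in auto)
  ultimately show ?thesis by blast
qed

lemma xstar_eq: "xstar f p X Y z = (THE x. x \<in> X \<and> (\<forall>x'\<in>X. gs z x \<le> gs z x'))"
  unfolding xstar_def gs_def ..

lemma xstar_char: "xstar f p X Y z \<in> X" "\<forall>w\<in>X. gs z (xstar f p X Y z) \<le> gs z w"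
  using theI'[OF xstar_ex1[of z]] unfolding xstar_eq by auto

lemma P_eq: "Pfun f p X Y z = gs z (xstar f p X Y z)"
proof -
  have "Pfun f p X Y z = (INF x\<in>X. gs z x)" unfolding Pfun_def gs_def ..
  also have "\<dots> = gs z (xstar f p X Y z)" using xstar_char by (intro INF_min) auto
  finally show ?thesis .
qed

lemma P_le: "w \<in> X \<Longrightarrow> Pfun f p X Y z \<le> gs z w"
  using P_eq xstar_char by auto

lemma gs_shift: "gs z' x = gs z x + p / 2 * ((norm (x - z'))\<^sup>2 - (norm (x - z))\<^sup>2)"
proof -
  have "gs z' x = (SUP y\<in>Y. Kfun f p x z y + p / 2 * ((norm (x - z'))\<^sup>2 - (norm (x - z))\<^sup>2))"
    unfolding gs_def Kfun_def by (simp add: algebra_simps)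
  also have "\<dots> = gs z x + p / 2 * ((norm (x - z'))\<^sup>2 - (norm (x - z))\<^sup>2)"
    unfolding gs_def by (rule SUP_shift[OF Y(1) K_bdd])
  finally show ?thesis .
qed

end

context sgda begin

lemma xmin_lip_y: "norm (xmin f p X y1 z - xmin f p X y2 z) \<le> L * norm (y1 - y2) / (p - L)"
proof -
  define u where "u = xmin f p X y1 z"
  define v where "v = xmin f p X y2 z"
  have uX: "u \<in> X" and vX: "v \<in> X" using xmin_char unfolding u_def v_def by auto
  show ?thesis unfolding u_def[symmetric] v_def[symmetric]
  proof (rule vi_perturb[where a="G y1 z u" and b="G y2 z v" and b'="G y2 z u"])
    show "G y1 z u \<bullet> (v - u) \<ge> 0" unfolding u_def using xmin_vi vX v_def by blast
    show "G y2 z v \<bullet> (u - v) \<ge> 0" unfolding v_def using xmin_vi uX u_def by blast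
    show "(p - L) * (norm (u - v))\<^sup>2 \<le> (G y2 z u - G y2 z v) \<bullet> (u - v)" by (rule G_lower)
    have "G y2 z u - G y1 z u = gx u y2 - gx u y1" unfolding G_def by simp
    then show "norm (G y2 z u - G y1 z u) \<le> L * norm (y1 - y2)"
      using Lipx2[of u y2 u y1] by (simp add: norm_minus_commute)
  qed (use mu_pos in auto)
qed

lemma xmin_lip_z: "norm (xmin f p X y z1 - xmin f p X y z2) \<le> p * norm (z1 - z2) / (p - L)"
proof -
  define u where "u = xmin f p X y z1"
  define v where "v = xmin f p X y z2"
  have uX: "u \<in> X" and vX: "v \<in> X" using xmin_char unfolding u_def v_def by auto
  show ?thesis unfolding u_def[symmetric] v_def[symmetric]
  proof (rule vi_perturb[where a="G y z1 u" and b="G y z2 v" and b'="G y z2 u"])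
    show "G y z1 u \<bullet> (v - u) \<ge> 0" unfolding u_def using xmin_vi vX v_def by blast
    show "G y z2 v \<bullet> (u - v) \<ge> 0" unfolding v_def using xmin_vi uX u_def by blast
    show "(p - L) * (norm (u - v))\<^sup>2 \<le> (G y z2 u - G y z2 v) \<bullet> (u - v)" by (rule G_lower)
    have "G y z2 u - G y z1 u = p *\<^sub>R (z1 - z2)" unfolding G_def by (simp add: algebra_simps)
    then show "norm (G y z2 u - G y z1 u) \<le> p * norm (z1 - z2)"
      using p3 Lpos by simp
  qed (use mu_pos in auto)
qed

end

lemma s_part:
  fixes p \<beta> s r e \<sigma>1 \<sigma>2 :: real
  assumes p: "p > 0" and \<beta>: "\<beta> > 0" "\<beta> < 1/36" and s: "s \<ge> 0"
    and \<sigma>2: "\<sigma>2 \<le> 3/2" "\<sigma>2 \<ge> 0"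
  shows "p/2*(2/\<beta> - 1)* s^2 - 2*p* s*(\<sigma>2* s + \<sigma>1*r + e) \<ge> p/(8*\<beta>)* s^2 - 24*p*\<beta>*e^2 - p*\<sigma>1^2*r^2"
proof -
  have i: "2*p* s*e \<le> p* s^2/(24*\<beta>) + 24*p*\<beta>*e^2"
  proof -
    have "0 \<le> p/(24*\<beta>)*(s - 24*\<beta>*e)^2" using p \<beta> by simp
    also have "\<dots> = p* s^2/(24*\<beta>) + 24*p*\<beta>*e^2 - 2*p* s*e"
      using \<beta> by (simp add: power2_eq_square field_simps)
    finally show ?thesis by simp
  qed
  have ii: "2*p* s*(\<sigma>1*r) \<le> p* s^2 + p*\<sigma>1^2*r^2"
  proof -
    have "0 \<le> p*(s - \<sigma>1*r)^2" using p by simp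
    also have "\<dots> = p* s^2 + p*\<sigma>1^2*r^2 - 2*p* s*(\<sigma>1*r)"
      by (simp add: power2_eq_square algebra_simps)
    finally show ?thesis by simp
  qed
  have iii: "2*p* s*(\<sigma>2* s) \<le> 3*p* s^2"
  proof -
    have "2*p* s*(\<sigma>2* s) = (2*\<sigma>2)*(p* s^2)" by (simp add: power2_eq_square algebra_simps)
    also have "\<dots> \<le> 3*(p* s^2)" using \<sigma>2 p by (intro mult_right_mono) auto
    finally show ?thesis by simp
  qed
  have iv: "p/2*(2/\<beta> - 1)* s^2 - 3*p* s^2 - p* s^2 - p* s^2/(24*\<beta>) - p/(8*\<beta>)* s^2 \<ge> 0"
  proof -
    have "p/2*(2/\<beta> - 1)* s^2 - 3*p* s^2 - p* s^2 - p* s^2/(24*\<beta>) - p/(8*\<beta>)* s^2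
       = (p* s^2) * ((5/6)/\<beta> - 9/2)" using \<beta> by (simp add: field_simps)
    moreover have "(5/6)/\<beta> - 9/2 \<ge> 0"
    proof -
      have "1/\<beta> > 36" using \<beta> by (simp add: field_simps)
      then show ?thesis by (simp add: field_simps)
    qed
    ultimately show ?thesis using p by simp
  qed
  define A where "A = 2 * p * s * (\<sigma>2 * s + \<sigma>1 * r + e)"
  define B1 where "B1 = 2 * p * s * (\<sigma>2 * s)"
  define B2 where "B2 = 2 * p * s * (\<sigma>1 * r)"
  define B3 where "B3 = 2 * p * s * e"
  define C1 where "C1 = p * s^2 / (24 * \<beta>)"
  define C2 where "C2 = 24 * p * \<beta> * e^2"
  define C3 where "C3 = p * s^2"
  define C4 where "C4 = p * \<sigma>1^2 * r^2"
  define C5 where "C5 = p / 2 * (2 / \<beta> - 1) * s^2"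
  define C6 where "C6 = p / (8 * \<beta>) * s^2"
  have "A = B1 + B2 + B3" unfolding A_def B1_def B2_def B3_def by (simp add: algebra_simps)
  moreover have "B3 \<le> C1 + C2" "B2 \<le> C3 + C4" "B1 \<le> 3 * C3" "0 \<le> C5 - 3 * C3 - C3 - C1 - C6"
    using i ii iii iv unfolding A_def B1_def B2_def B3_def C1_def C2_def C3_def C4_def C5_def C6_def by (simp_all add: mult.assoc)
  ultimately have "C6 - C2 - C4 \<le> C5 - A" by linarith
  then show ?thesis unfolding A_def B1_def B2_def B3_def C1_def C2_def C3_def C4_def C5_def C6_def by simp
qed

lemma xy_part:
  fixes L p c \<alpha> a b r Y2 :: real
  assumes L: "L > 0" and p: "p > 3 * L" and c: "c > 0" "c < 1 / (p + L)"
    and \<alpha>: "\<alpha> > 0" "\<alpha> < 1 / (11 * L)" "\<alpha> < c^2 * (p - L)^2 / (4 * L * (1 + c * (p - L))^2)"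
    and nn: "a \<ge> 0" "b \<ge> 0" "r \<ge> 0"
    and r: "r \<le> \<alpha> * L * ((p + L + 1 / c) / (p - L)) * a"
    and Y2: "Y2 \<le> (b + r)^2"
  shows "(1 / c - (p + L) / 2) * a^2 + b^2 / \<alpha> - 2 * L * (L / (p - L) * b + (p + L + 1 / c) / (p - L) * a + b) * b
           - p * (L / (p - L))^2 * r^2 \<ge> 1 / (8 * c) * a^2 + 1 / (8 * \<alpha>) * Y2"
proof -
  define \<mu> where "\<mu> = p - L"
  define \<kappa> where "\<kappa> = (p + L + 1 / c) / (p - L)"
  define \<sigma> where "\<sigma> = L / (p - L)"
  have \<mu>: "\<mu> > 0" "\<mu> \<ge> 2 * L" using p L unfolding \<mu>_def by auto
  have cpL: "c * (p + L) < 1" using c p L by (simp add: field_simps)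
  have D1: "4 * c * L \<le> 1"
  proof -
    have "4 * L \<le> p + L" using p by simp
    then have "c * (4 * L) \<le> c * (p + L)" using c by (intro mult_left_mono) auto
    then show ?thesis using cpL by simp
  qed
  have A3: "L \<le> 1 / (4 * c)" using D1 c by (simp add: field_simps)
  have \<sigma>: "\<sigma> \<le> 1/2" "\<sigma> \<ge> 0" using \<mu> L unfolding \<sigma>_def \<mu>_def by (auto simp: field_simps)
  have \<kappa>pos: "\<kappa> > 0" using \<mu> c p L unfolding \<kappa>_def \<mu>_def by (auto intro!: divide_pos_pos add_pos_pos)
  have \<kappa>c: "c * \<kappa> * \<mu> \<le> 2"
  proof -
    have "c * \<kappa> * \<mu> = c * (p + L) + 1" unfolding \<kappa>_def \<mu>_def using \<mu> c by (simp add: field_simps \<mu>_def)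
    then show ?thesis using cpL by simp
  qed
  have \<kappa>c2: "(c * \<kappa> * \<mu>)^2 \<le> 4"
  proof -
    have "0 \<le> c * \<kappa> * \<mu>" using c \<kappa>pos \<mu> by simp
    then have "(c * \<kappa> * \<mu>)^2 \<le> 2^2" using \<kappa>c by (intro power_mono) auto
    then show ?thesis by simp
  qed
  have F\<alpha>2: "4 * L * \<alpha> * (1 + c * \<mu>)^2 \<le> c^2 * \<mu>^2"
  proof -
    have cm: "c * \<mu> > 0" using c \<mu> by simp
    have "0 < 4 * L * (1 + c * \<mu>)^2" using L cm by simp
    then show ?thesis using \<alpha>(3) unfolding \<mu>_def by (simp add: field_simps)
  qed
  have one_le: "1 \<le> (1 + c * \<mu>)^2" using c \<mu> by simp
  have F\<alpha>1: "4 * L * \<alpha> \<le> c^2 * \<mu>^2"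
  proof -
    have "4 * L * \<alpha> * 1 \<le> 4 * L * \<alpha> * (1 + c * \<mu>)^2" using one_le L \<alpha> by (intro mult_left_mono) auto
    then show ?thesis using F\<alpha>2 by simp
  qed
  have A1: "\<alpha> * L^2 * \<kappa>^2 \<le> L"
  proof -
    have "(\<alpha> * L^2 * \<kappa>^2) * (c^2 * \<mu>^2) = (\<alpha> * L^2) * (c * \<kappa> * \<mu>)^2" by (simp add: power2_eq_square algebra_simps)
    also have "\<dots> \<le> (\<alpha> * L^2) * 4" using \<kappa>c2 \<alpha> L by (intro mult_left_mono) auto
    also have "\<dots> = L * (4 * L * \<alpha>)" by (simp add: power2_eq_square algebra_simps)
    also have "\<dots> \<le> L * (c^2 * \<mu>^2)" using F\<alpha>1 L by (intro mult_left_mono) auto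
    finally show ?thesis using c \<mu> by simp
  qed
  have A2: "p * \<sigma>^2 * \<alpha> \<le> 1/4"
  proof -
    have pL: "p * L \<le> 3/4 * \<mu>^2"
    proof -
      have "\<mu>^2 - 4/3 * (p * L) = (p - 3 * L) * (p - L / 3)" unfolding \<mu>_def by (simp add: power2_eq_square algebra_simps)
      moreover have "(p - 3 * L) * (p - L / 3) \<ge> 0" using p L by simp
      ultimately show ?thesis by simp
    qed
    have "L * \<alpha> \<le> 1/11" using \<alpha>(2) L by (simp add: field_simps)
    have sm: "\<sigma> * \<mu> = L" unfolding \<sigma>_def using \<mu> by (simp add: \<mu>_def)
    have "p * \<sigma>^2 * \<alpha> * \<mu>^2 = p * \<alpha> * (\<sigma> * \<mu>)^2" by (simp add: power2_eq_square algebra_simps)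
    also have "\<dots> = (p * L) * (L * \<alpha>)" unfolding sm by (simp add: power2_eq_square algebra_simps)
    also have "\<dots> \<le> (3/4 * \<mu>^2) * (1/11)" by (rule mult_mono[OF pL \<open>L * \<alpha> \<le> 1/11\<close>]) (use L \<alpha> in auto)
    also have "\<dots> \<le> 1/4 * \<mu>^2" by simp
    finally show ?thesis using \<mu> by simp
  qed
  have B1: "4 * c * L^2 * \<kappa>^2 * \<alpha> \<le> 21/44"
  proof -
    define w where "w = c * L"
    have w: "w \<ge> 0" "w \<le> 1/4" using D1 c L unfolding w_def by auto
    have q: "44 * (4 * w) \<le> 21 * (1 + 2 * w)^2"
    proof -
      have "21 * (1 + 2 * w)^2 - 44 * (4 * w) = 84 * (w - 1/4)^2 + 50 * (1/4 - w) + 13/4"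
        by (simp add: power2_eq_square algebra_simps)
      moreover have "(w - 1/4)^2 \<ge> 0" by simp
      moreover have "50 * (1/4 - w) \<ge> 0" using w by simp
      ultimately show ?thesis by linarith
    qed
    have "(1 + 2 * w)^2 \<le> (1 + c * \<mu>)^2"
    proof -
      have "c * (2 * L) \<le> c * \<mu>" using \<mu> c by (intro mult_left_mono) auto
      then have "2 * w \<le> c * \<mu>" unfolding w_def by simp
      then show ?thesis using w by (intro power_mono) auto
    qed
    then have q2: "4 * (c * L) \<le> 21/44 * (1 + c * \<mu>)^2" using q unfolding w_def by simp
    have "(4 * c * L^2 * \<kappa>^2 * \<alpha>) * (c * \<mu>^2 * (1 + c * \<mu>)^2) = (4 * L * \<alpha> * (1 + c * \<mu>)^2) * (L * (c * \<kappa> * \<mu>)^2)"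
      by (simp add: power2_eq_square algebra_simps)
    also have "\<dots> \<le> (c^2 * \<mu>^2) * (L * 4)"
    proof (rule mult_mono[OF F\<alpha>2])
      show "L * (c * \<kappa> * \<mu>)^2 \<le> L * 4" using \<kappa>c2 L by (intro mult_left_mono) auto
    qed (use L in auto)
    also have "\<dots> = (4 * (c * L)) * (c * \<mu>^2)" by (simp add: power2_eq_square algebra_simps)
    also have "\<dots> \<le> (21/44 * (1 + c * \<mu>)^2) * (c * \<mu>^2)" using q2 c \<mu> by (intro mult_right_mono) auto
    finally have "(4 * c * L^2 * \<kappa>^2 * \<alpha>) * (c * \<mu>^2 * (1 + c * \<mu>)^2) \<le> 21/44 * (c * \<mu>^2 * (1 + c * \<mu>)^2)"
      by (simp add: algebra_simps)
    moreover have "c * \<mu>^2 * (1 + c * \<mu>)^2 > 0"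
    proof -
      have "c * \<mu> > 0" using c \<mu> by simp
      then have "(1 + c * \<mu>)^2 > 0" by simp
      then show ?thesis using c \<mu> by simp
    qed
    ultimately show ?thesis by (rule mult_right_le_imp_le)
  qed
  have rr: "r^2 \<le> (\<alpha> * L * \<kappa> * a)^2" using r nn unfolding \<kappa>_def by (intro power_mono) auto
  have R: "(p * \<sigma>^2 + 1 / (4 * \<alpha>)) * r^2 \<le> 1 / (8 * c) * a^2"
  proof -
    have "(p * \<sigma>^2 + 1 / (4 * \<alpha>)) * r^2 \<le> (p * \<sigma>^2 + 1 / (4 * \<alpha>)) * (\<alpha> * L * \<kappa> * a)^2"
      using rr \<alpha> p L by (intro mult_left_mono) (auto intro!: add_nonneg_nonneg)
    also have "\<dots> = (p * \<sigma>^2 * \<alpha> + 1/4) * (\<alpha> * L^2 * \<kappa>^2) * a^2"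
      using \<alpha> by (simp add: power2_eq_square field_simps)
    also have "\<dots> \<le> (1/2) * L * a^2"
    proof -
      have "(p * \<sigma>^2 * \<alpha> + 1/4) * (\<alpha> * L^2 * \<kappa>^2) \<le> (1/2) * L"
      proof -
        have "p * \<sigma>^2 * \<alpha> + 1/4 \<le> 1/2" using A2 by simp
        moreover have "0 \<le> \<alpha> * L^2 * \<kappa>^2" using \<alpha> by simp
        ultimately show ?thesis using mult_mono[OF _ A1, of "p * \<sigma>^2 * \<alpha> + 1/4" "1/2"] by simp
      qed
      then show ?thesis by (intro mult_right_mono) auto
    qed
    also have "\<dots> \<le> 1 / (8 * c) * a^2"
    proof -
      have "(1/2) * L \<le> 1 / (8 * c)" using A3 c by (simp add: field_simps)
      then show ?thesis by (intro mult_right_mono) auto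
    qed
    finally show ?thesis .
  qed
  have cross: "2 * L * \<kappa> * a * b \<le> a^2 / (4 * c) + 4 * c * L^2 * \<kappa>^2 * b^2"
  proof -
    have "0 \<le> (a - 4 * c * L * \<kappa> * b)^2 / (4 * c)" using c by simp
    also have "\<dots> = a^2 / (4 * c) + 4 * c * L^2 * \<kappa>^2 * b^2 - 2 * L * \<kappa> * a * b"
      using c by (simp add: power2_eq_square field_simps)
    finally show ?thesis by simp
  qed
  define ic where "ic = 1 / c"
  define ia where "ia = 1 / \<alpha>"
  have bcoef: "ia - 2 * L * \<sigma> - 2 * L - ia / 4 - 4 * c * L^2 * \<kappa>^2 \<ge> 0"
  proof -
    have "2 * L * \<sigma> + 2 * L \<le> 3 * L" using \<sigma> L by simp
    also have "\<dots> \<le> 3 / 11 * ia" using \<alpha> L unfolding ia_def by (simp add: field_simps)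
    finally have 1: "2 * L * \<sigma> + 2 * L \<le> 3 / 11 * ia" .
    have 2: "4 * c * L^2 * \<kappa>^2 \<le> 21 / 44 * ia" using B1 \<alpha> unfolding ia_def by (simp add: field_simps)
    show ?thesis using 1 2 by linarith
  qed
  have acoef: "ic - (p + L) / 2 - ic / 2 \<ge> 0"
  proof -
    have "(p + L) \<le> ic" using c cpL unfolding ic_def by (simp add: field_simps)
    then show ?thesis by (simp add: field_simps)
  qed
  have Y2': "ia / 8 * Y2 \<le> ia / 4 * b^2 + ia / 4 * r^2"
  proof -
    have "(b + r)^2 \<le> 2 * b^2 + 2 * r^2" using sum_squares_bound[of b r] by (simp add: power2_eq_square algebra_simps)
    then have "Y2 \<le> 2 * b^2 + 2 * r^2" using Y2 by simp
    moreover have "ia \<ge> 0" using \<alpha> unfolding ia_def by simp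
    ultimately have "ia / 8 * Y2 \<le> ia / 8 * (2 * b^2 + 2 * r^2)" by (intro mult_left_mono) auto
    also have "\<dots> = ia / 4 * b^2 + ia / 4 * r^2" by (simp add: algebra_simps)
    finally show ?thesis .
  qed
  define A2' where "A2' = a^2"
  define B2' where "B2' = b^2"
  define R2' where "R2' = r^2"
  define AB where "AB = a * b"
  have f1: "1 / (8 * c) * a^2 = ic / 8 * A2'" "1 / (8 * \<alpha>) * Y2 = ia / 8 * Y2" "b^2 / \<alpha> = ia * B2'"
    "(1 / c - (p + L) / 2) * a^2 = (ic - (p + L) / 2) * A2'"
    unfolding ic_def ia_def A2'_def B2'_def by simp_all
  have f2: "2 * L * (L / (p - L) * b + (p + L + 1 / c) / (p - L) * a + b) * b = 2 * L * \<sigma> * B2' + 2 * L * \<kappa> * AB + 2 * L * B2'"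
    unfolding \<sigma>_def[symmetric] \<kappa>_def[symmetric] B2'_def AB_def by (simp add: power2_eq_square algebra_simps)
  have f3: "p * (L / (p - L))^2 * r^2 = p * \<sigma>^2 * R2'" unfolding \<sigma>_def[symmetric] R2'_def ..
  define Q1 where "Q1 = (ic - (p + L) / 2 - ic / 2) * A2'"
  define Q2 where "Q2 = (ia - 2 * L * \<sigma> - 2 * L - ia / 4 - 4 * c * L^2 * \<kappa>^2) * B2'"
  define Q3 where "Q3 = ic / 8 * A2' - (p * \<sigma>^2 + ia / 4) * R2'"
  define Q4 where "Q4 = ic / 4 * A2' + 4 * c * L^2 * \<kappa>^2 * B2' - 2 * L * \<kappa> * AB"
  define Q5 where "Q5 = ia / 4 * B2' + ia / 4 * R2' - ia / 8 * Y2"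
  have q1: "Q1 \<ge> 0" unfolding Q1_def A2'_def using acoef by simp
  have q2: "Q2 \<ge> 0" unfolding Q2_def B2'_def using bcoef by simp
  have q3: "Q3 \<ge> 0" unfolding Q3_def ic_def ia_def A2'_def R2'_def using R by (simp add: field_simps)
  have q4: "Q4 \<ge> 0" unfolding Q4_def ic_def A2'_def B2'_def AB_def using cross c by (simp add: field_simps)
  have q5: "Q5 \<ge> 0" unfolding Q5_def B2'_def R2'_def using Y2' by linarith
  have id: "((ic - (p + L) / 2) * A2' + ia * B2' - (2 * L * \<sigma> * B2' + 2 * L * \<kappa> * AB + 2 * L * B2') - p * \<sigma>^2 * R2')
      - (ic / 8 * A2' + ia / 8 * Y2) = Q1 + Q2 + Q3 + Q4 + Q5"
    unfolding Q1_def Q2_def Q3_def Q4_def Q5_def by (simp add: algebra_simps)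
  show ?thesis unfolding f1 f2 f3 using id q1 q2 q3 q4 q5 by linarith
qed


lemma combine:
  fixes T T1 T25 T3 T46 X1 X2a X2b X3 X4 S1 S2 P R1 R2 :: real
  assumes "T = T1 + T25 + T3 + T46" "X1 \<le> T1" "X2a - X2b \<le> T25" "T3 = X3" "- X4 \<le> T46"
    "S1 - S2 - P \<le> X3 - X4" "R1 + R2 \<le> X1 + X2a - X2b - P"
  shows "R1 + R2 + S1 - S2 \<le> T"
  using assms by linarith

lemma lin_T25:
  fixes I12 I1 I2 E Mb K1 D1 B :: real
  shows "I12 = I1 - I2 \<Longrightarrow> E = 2 * Mb \<Longrightarrow> - Mb \<le> I12 \<Longrightarrow> - I2 \<le> K1 \<Longrightarrow> I1 \<le> D1 \<Longrightarrow> B \<le> I2 \<Longrightarrow> B - E \<le> K1 + 2 * D1"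
  by linarith

lemma lin_T46:
  fixes A B D P PJ Q :: real
  shows "A \<le> D \<Longrightarrow> B \<le> P \<Longrightarrow> A + B = PJ \<Longrightarrow> - (2 * PJ) \<le> Q \<Longrightarrow> - Q \<le> 2 * D + 2 * P"
  by linarith

context sgda begin

lemma one_step:
  fixes x y z x' y' z' yp :: _ and c \<alpha> \<beta> :: real
  assumes xX: "x \<in> X" and yY: "y \<in> Y"
    and c: "c > 0" "c < 1 / (p + L)"
    and \<alpha>: "\<alpha> > 0" "\<alpha> < 1 / (11 * L)" "\<alpha> < c^2 * (p - L)^2 / (4 * L * (1 + c * (p - L))^2)"
    and \<beta>: "\<beta> > 0" "\<beta> < 1 / 36"
    and x'_def: "x' = closest_point X (x - c *\<^sub>R (gx x y + p *\<^sub>R (x - z)))"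
    and y'_def: "y' = closest_point Y (y + \<alpha> *\<^sub>R gy x' y)"
    and z'_def: "z' = z + \<beta> *\<^sub>R (x' - z)"
    and yp_def: "yp = closest_point Y (y + \<alpha> *\<^sub>R gy (xmin f p X y z) y)"
  shows "1 / (8 * c) * (norm (x - x'))^2 + 1 / (8 * \<alpha>) * (norm (y - yp))^2 + p / (8 * \<beta>) * (norm (z - z'))^2
         - 24 * p * \<beta> * (norm (xstar f p X Y z - xmin f p X yp z))^2
       \<le> phifun f p X Y x y z - phifun f p X Y x' y' z'"
proof -
  define v where "v = xmin f p X y z"
  define u where "u = xmin f p X y' z"
  define w where "w = xmin f p X y' z'"
  define q where "q = xmin f p X yp z"
  define xs where "xs = xstar f p X Y z"
  define a where "a = norm (x - x')"
  define b where "b = norm (y - y')"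
  define s where "s = norm (z - z')"
  define r where "r = norm (y' - yp)"
  define e where "e = norm (xs - q)"
  define \<kappa> where "\<kappa> = (p + L + 1 / c) / (p - L)"
  have \<mu>: "p - L > 0" using mu_pos .
  have x'X: "x' \<in> X" unfolding x'_def using closest_point_in_set X(1,2) by blast
  have y'Y: "y' \<in> Y" unfolding y'_def using closest_point_in_set Y(1,2) compact_imp_closed by blast
  have ypY: "yp \<in> Y" unfolding yp_def using closest_point_in_set Y(1,2) compact_imp_closed by blast
  have vX: "v \<in> X" and uX: "u \<in> X" and wX: "w \<in> X" and qX: "q \<in> X"
    unfolding v_def u_def w_def q_def using xmin_char by auto
  have xsX: "xs \<in> X" unfolding xs_def using xstar_char by auto
  have x'G: "x' = closest_point X (x - c *\<^sub>R G y z x)" unfolding x'_def G_def ..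
  have nn: "a \<ge> 0" "b \<ge> 0" "s \<ge> 0" "r \<ge> 0" "e \<ge> 0" unfolding a_def b_def s_def r_def e_def by auto

  have H1: "(1 / c - (p + L) / 2) * a^2 \<le> Kfun f p x z y - Kfun f p x' z y"
  proof -
    have "(x - c *\<^sub>R G y z x - x') \<bullet> (x - x') \<le> 0"
      using closest_point_dot[OF X(3) X(2) xX, of "x - c *\<^sub>R G y z x"] unfolding x'G[symmetric] .
    then have "a^2 \<le> c * (G y z x \<bullet> (x - x'))"
      unfolding a_def by (simp add: inner_diff_left power2_norm_eq_inner algebra_simps)
    then have g: "a^2 / c \<le> G y z x \<bullet> (x - x')" using c by (simp add: field_simps)
    have "Kfun f p x' z y \<le> Kfun f p x z y + G y z x \<bullet> (x' - x) + (p + L) / 2 * (norm (x' - x))^2"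
      by (rule K_upper)
    then have "Kfun f p x' z y \<le> Kfun f p x z y - G y z x \<bullet> (x - x') + (p + L) / 2 * a^2"
      unfolding a_def by (simp add: inner_diff_right norm_minus_commute)
    then have "a^2 / c - (p + L) / 2 * a^2 \<le> Kfun f p x z y - Kfun f p x' z y" using g by linarith
    moreover have "(1 / c - (p + L) / 2) * a^2 = a^2 / c - (p + L) / 2 * a^2" by (simp add: algebra_simps)
    ultimately show ?thesis by simp
  qed

  have H3: "Kfun f p x' z y' - Kfun f p x' z' y' = p / 2 * (2 / \<beta> - 1) * s^2"
  proof -
    define n where "n = norm (x' - z)"
    have e1: "x' - z' = (1 - \<beta>) *\<^sub>R (x' - z)" unfolding z'_def by (simp add: algebra_simps)
    have e2: "z - z' = (- \<beta>) *\<^sub>R (x' - z)" unfolding z'_def by (simp add: algebra_simps)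
    have "norm (x' - z') = \<bar>1 - \<beta>\<bar> * n" unfolding e1 n_def by simp
    then have n1: "(norm (x' - z'))^2 = (1 - \<beta>)^2 * n^2" by (simp add: power_mult_distrib)
    have "s = \<beta> * n" unfolding s_def e2 n_def using \<beta> by simp
    then have "p / 2 * (2 / \<beta> - 1) * s^2 = p / 2 * (2 * \<beta> - \<beta>^2) * n^2"
      using \<beta> by (simp add: power2_eq_square field_simps)
    moreover have "Kfun f p x' z y' - Kfun f p x' z' y' = p / 2 * (n^2 - (1 - \<beta>)^2 * n^2)"
      unfolding Kfun_def n1 n_def by (simp add: algebra_simps)
    ultimately show ?thesis by (simp add: power2_eq_square algebra_simps)
  qed

  have H2: "- (gy x' y \<bullet> (y' - y)) \<le> Kfun f p x' z y - Kfun f p x' z y'"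
    using f_tangent[of x' y' y] unfolding Kfun_def by simp
  have H5: "gy u y' \<bullet> (y' - y) \<le> dfun f p X y' z - dfun f p X y z"
  proof -
    have "dfun f p X y' z = Kfun f p u z y'" unfolding u_def by (rule d_eq)
    moreover have "dfun f p X y z \<le> Kfun f p u z y" using d_le[OF uX] .
    moreover have "f u y \<le> f u y' + gy u y' \<bullet> (y - y')" by (rule f_tangent)
    moreover have "gy u y' \<bullet> (y - y') = - (gy u y' \<bullet> (y' - y))" by (simp add: inner_diff_right)
    ultimately show ?thesis unfolding Kfun_def by simp
  qed
  have H7: "b^2 / \<alpha> \<le> gy x' y \<bullet> (y' - y)"
  proof -
    have "(y + \<alpha> *\<^sub>R gy x' y - y') \<bullet> (y - y') \<le> 0"
      using closest_point_dot[OF Y(3) compact_imp_closed[OF Y(2)] yY, of "y + \<alpha> *\<^sub>R gy x' y"]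
      unfolding y'_def[symmetric] .
    then have "b^2 \<le> \<alpha> * (gy x' y \<bullet> (y' - y))"
      unfolding b_def by (simp add: inner_diff_left inner_diff_right power2_norm_eq_inner algebra_simps inner_commute)
    then show ?thesis using \<alpha> by (simp add: field_simps)
  qed
  have H9a: "norm (u - v) \<le> L / (p - L) * b"
    using xmin_lip_y[of y' z y] unfolding u_def v_def b_def by (simp add: norm_minus_commute)
  have H9b: "norm (x' - v) \<le> \<kappa> * a"
  proof -
    have "norm (x' - v) \<le> ((p + L) * a + a / c) / (p - L)"
    proof (rule vi_perturb[where a="G y z x + (1 / c) *\<^sub>R (x' - x)" and b="G y z v" and b'="G y z x'"])
      have "(x - c *\<^sub>R G y z x - x') \<bullet> (v - x') \<le> 0"
        using closest_point_dot[OF X(3) X(2) vX, of "x - c *\<^sub>R G y z x"] unfolding x'G[symmetric] .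
      then have "0 \<le> c * ((G y z x + (1 / c) *\<^sub>R (x' - x)) \<bullet> (v - x'))"
        using c by (simp add: inner_diff_left inner_add_left algebra_simps)
      then show "0 \<le> (G y z x + (1 / c) *\<^sub>R (x' - x)) \<bullet> (v - x')"
        using c by (simp add: zero_le_mult_iff)
      show "0 \<le> G y z v \<bullet> (x' - v)" unfolding v_def using xmin_vi x'X by blast
      show "(p - L) * (norm (x' - v))\<^sup>2 \<le> (G y z x' - G y z v) \<bullet> (x' - v)" by (rule G_lower)
      have "G y z x' - (G y z x + (1 / c) *\<^sub>R (x' - x)) = (G y z x' - G y z x) - (1 / c) *\<^sub>R (x' - x)" by simp
      then have "norm (G y z x' - (G y z x + (1 / c) *\<^sub>R (x' - x))) \<le> norm (G y z x' - G y z x) + norm ((1 / c) *\<^sub>R (x' - x))"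
        by (metis norm_triangle_ineq4)
      also have "\<dots> \<le> (p + L) * a + a / c"
        using G_lip[of y z x' x] c unfolding a_def by (simp add: norm_minus_commute)
      finally show "norm (G y z x' - (G y z x + (1 / c) *\<^sub>R (x' - x))) \<le> (p + L) * a + a / c" .
    qed (use \<mu> in auto)
    also have "\<dots> = \<kappa> * a" unfolding \<kappa>_def using c by (simp add: field_simps)
    finally show ?thesis .
  qed
  have H8: "- (L * (L / (p - L) * b + \<kappa> * a + b)) * b \<le> (gy u y' - gy x' y) \<bullet> (y' - y)"
  proof -
    have "norm (u - x') \<le> L / (p - L) * b + \<kappa> * a"
      using norm_triangle_ineq[of "u - v" "v - x'"] H9a H9b by (simp add: norm_minus_commute)
    then have "norm (gy u y' - gy x' y) \<le> L * (L / (p - L) * b + \<kappa> * a + b)"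
      using Lipy2[of u y' x' y] Lpos unfolding b_def
      by (smt (verit, best) distrib_left mult_left_mono norm_minus_commute)
    moreover have "- ((gy u y' - gy x' y) \<bullet> (y' - y)) \<le> norm (gy u y' - gy x' y) * b"
      using abs_ge_minus_self[of "(gy u y' - gy x' y) \<bullet> (y' - y)"] Cauchy_Schwarz_ineq2[of "gy u y' - gy x' y" "y' - y"]
      unfolding b_def by (simp add: norm_minus_commute)
    ultimately have "- ((gy u y' - gy x' y) \<bullet> (y' - y)) \<le> L * (L / (p - L) * b + \<kappa> * a + b) * b"
      using nn(2) by (smt (verit) mult_right_mono)
    then show ?thesis by simp
  qed
  have T25: "b^2 / \<alpha> - 2 * L * (L / (p - L) * b + (p + L + 1 / c) / (p - L) * a + b) * b
      \<le> (Kfun f p x' z y - Kfun f p x' z y') + 2 * (dfun f p X y' z - dfun f p X y z)"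
  proof -
    have e1: "(gy u y' - gy x' y) \<bullet> (y' - y) = gy u y' \<bullet> (y' - y) - gy x' y \<bullet> (y' - y)" by (simp add: inner_diff_left)
    define Mb where "Mb = L * (L / (p - L) * b + \<kappa> * a + b) * b"
    have e2: "2 * L * (L / (p - L) * b + (p + L + 1 / c) / (p - L) * a + b) * b = 2 * Mb"
      unfolding \<kappa>_def Mb_def by (simp add: algebra_simps)
    have h8: "- Mb \<le> (gy u y' - gy x' y) \<bullet> (y' - y)" using H8 unfolding Mb_def by simp
    show ?thesis by (rule lin_T25[OF e1 e2 h8 H2 H5 H7])
  qed

  have H4: "p / 2 * ((norm (w - z'))^2 - (norm (w - z))^2) \<le> dfun f p X y' z' - dfun f p X y' z"
  proof -
    have "dfun f p X y' z' = Kfun f p w z' y'" unfolding w_def by (rule d_eq)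
    moreover have "dfun f p X y' z \<le> Kfun f p w z y'" using d_le[OF wX] .
    ultimately show ?thesis unfolding Kfun_def by (simp add: algebra_simps)
  qed
  have H6: "p / 2 * ((norm (xs - z))^2 - (norm (xs - z'))^2) \<le> Pfun f p X Y z - Pfun f p X Y z'"
  proof -
    have "Pfun f p X Y z = gs z xs" unfolding xs_def by (rule P_eq)
    moreover have "Pfun f p X Y z' \<le> gs z' xs" by (rule P_le[OF xsX])
    moreover have "gs z' xs = gs z xs + p / 2 * ((norm (xs - z'))^2 - (norm (xs - z))^2)" by (rule gs_shift)
    ultimately show ?thesis by (simp add: algebra_simps)
  qed
  have Zc: "p / 2 * ((norm (w - z'))^2 - (norm (w - z))^2) + p / 2 * ((norm (xs - z))^2 - (norm (xs - z'))^2)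
      = p * ((w - xs) \<bullet> (z - z'))"
    by (simp add: power2_norm_eq_inner inner_diff_left inner_diff_right inner_commute algebra_simps)
  have H9c: "norm (w - u) \<le> p / (p - L) * s"
    using xmin_lip_z[of y' z' z] unfolding w_def u_def s_def by (simp add: norm_minus_commute)
  have H9d: "norm (u - q) \<le> L / (p - L) * r"
    using xmin_lip_y[of y' z yp] unfolding u_def q_def r_def by simp
  have H12: "r \<le> \<alpha> * L * \<kappa> * a"
  proof -
    have "dist y' yp \<le> dist (y + \<alpha> *\<^sub>R gy x' y) (y + \<alpha> *\<^sub>R gy v y)"
      unfolding y'_def yp_def v_def by (rule closest_point_lipschitz[OF Y(3) compact_imp_closed[OF Y(2)] Y(1)])
    then have "r \<le> norm ((y + \<alpha> *\<^sub>R gy x' y) - (y + \<alpha> *\<^sub>R gy v y))" unfolding r_def dist_norm .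
    also have "\<dots> = \<alpha> * norm (gy x' y - gy v y)" using \<alpha> by (simp add: scaleR_diff_right[symmetric])
    also have "\<dots> \<le> \<alpha> * (L * norm (x' - v))" using Lipy2[of x' y v y] \<alpha> by (intro mult_left_mono) auto
    also have "\<dots> \<le> \<alpha> * (L * (\<kappa> * a))" using H9b \<alpha> Lpos by (intro mult_left_mono) auto
    finally show ?thesis by (simp add: algebra_simps)
  qed
  have T46: "- (2 * p * s * (p / (p - L) * s + L / (p - L) * r + e))
      \<le> 2 * (dfun f p X y' z' - dfun f p X y' z) + 2 * (Pfun f p X Y z - Pfun f p X Y z')"
  proof -
    have "norm (w - xs) \<le> norm (w - u) + norm (u - q) + norm (q - xs)"
      using norm_triangle_ineq[of "w - u" "u - q"] norm_triangle_ineq[of "w - u + (u - q)" "q - xs"] by simp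
    also have "\<dots> \<le> p / (p - L) * s + L / (p - L) * r + e"
      using H9c H9d unfolding e_def by (simp add: norm_minus_commute)
    finally have nw: "norm (w - xs) \<le> p / (p - L) * s + L / (p - L) * r + e" .
    have "- ((w - xs) \<bullet> (z - z')) \<le> norm (w - xs) * s"
      using abs_ge_minus_self[of "(w - xs) \<bullet> (z - z')"] Cauchy_Schwarz_ineq2[of "w - xs" "z - z'"]
      unfolding s_def by linarith
    also have "\<dots> \<le> (p / (p - L) * s + L / (p - L) * r + e) * s" using nw nn by (intro mult_right_mono) auto
    finally have "(2 * p) * (- ((w - xs) \<bullet> (z - z'))) \<le> (2 * p) * ((p / (p - L) * s + L / (p - L) * r + e) * s)"
      using p3 Lpos by (intro mult_left_mono) auto
    then have h: "- (2 * (p * ((w - xs) \<bullet> (z - z')))) \<le> 2 * p * s * (p / (p - L) * s + L / (p - L) * r + e)"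
      by (simp add: algebra_simps)
    show ?thesis by (rule lin_T46[OF H4 H6 Zc h])
  qed

  have Tsplit: "phifun f p X Y x y z - phifun f p X Y x' y' z'
     = (Kfun f p x z y - Kfun f p x' z y) + ((Kfun f p x' z y - Kfun f p x' z y') + 2 * (dfun f p X y' z - dfun f p X y z))
       + (Kfun f p x' z y' - Kfun f p x' z' y') + (2 * (dfun f p X y' z' - dfun f p X y' z) + 2 * (Pfun f p X Y z - Pfun f p X Y z'))"
    unfolding phifun_def by (simp add: algebra_simps)
  have SP: "p / (8 * \<beta>) * s^2 - 24 * p * \<beta> * e^2 - p * (L / (p - L))^2 * r^2
     \<le> p / 2 * (2 / \<beta> - 1) * s^2 - 2 * p * s * (p / (p - L) * s + L / (p - L) * r + e)"
  proof (rule s_part)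
    show "p / (p - L) \<le> 3 / 2" using p3 Lpos \<mu> by (simp add: field_simps)
    show "p / (p - L) \<ge> 0" using \<mu> p3 Lpos by simp
  qed (use p3 Lpos \<beta> nn in auto)
  have XY: "1 / (8 * c) * a^2 + 1 / (8 * \<alpha>) * (norm (y - yp))^2
     \<le> (1 / c - (p + L) / 2) * a^2 + b^2 / \<alpha> - 2 * L * (L / (p - L) * b + (p + L + 1 / c) / (p - L) * a + b) * b
           - p * (L / (p - L))^2 * r^2"
  proof (rule xy_part[OF Lpos p3 c \<alpha> nn(1,2,4)])
    show "r \<le> \<alpha> * L * ((p + L + 1 / c) / (p - L)) * a" using H12 unfolding \<kappa>_def .
    have "norm (y - yp) \<le> b + r" using norm_triangle_ineq[of "y - y'" "y' - yp"] unfolding b_def r_def by simp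
    then show "(norm (y - yp))^2 \<le> (b + r)^2" by (intro power_mono) auto
  qed
  show ?thesis
    unfolding a_def[symmetric] s_def[symmetric] xs_def[symmetric] q_def[symmetric] e_def[symmetric]
    by (rule combine[OF Tsplit H1 T25 H3 T46 SP XY])
qed

end

theorem proposition2:
  fixes f :: "'a::euclidean_space \<Rightarrow> 'b::euclidean_space \<Rightarrow> real"
    and gx :: "'a \<Rightarrow> 'b \<Rightarrow> 'a" and gy :: "'a \<Rightarrow> 'b \<Rightarrow> 'b"
    and X :: "'a set" and Y :: "'b set"
    and L p c \<alpha> \<beta> :: real
    and xs :: "nat \<Rightarrow> 'a" and ys :: "nat \<Rightarrow> 'b" and zs :: "nat \<Rightarrow> 'a"
  assumes X: "X \<noteq> {}" "closed X" "convex X"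
    and Y: "Y \<noteq> {}" "compact Y" "convex Y"
    and deriv: "\<And>x y. (case_prod f has_derivative (\<lambda>(h, k). gx x y \<bullet> h + gy x y \<bullet> k)) (at (x, y))"
    and concave: "\<And>x. concave_on UNIV (f x)"
    and Lpos: "L > 0"
    and Lip_x: "\<And>x y x' y'. norm (gx x y - gx x' y') \<le> L * norm ((x, y) - (x', y'))"
    and Lip_y: "\<And>x y x' y'. norm (gy x y - gy x' y') \<le> L * norm ((x, y) - (x', y'))"
    and psi_bdd: "\<exists>B. \<forall>x. B \<le> (SUP y\<in>Y. f x y)"
    and p: "p > 3 * L"
    and c: "c > 0" "c < 1 / (p + L)"
    and \<alpha>: "\<alpha> > 0" "\<alpha> < 1 / (11 * L)"
          "\<alpha> < c\<^sup>2 * (p - L)\<^sup>2 / (4 * L * (1 + c * (p - L))\<^sup>2)"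
    and \<beta>: "\<beta> > 0" "\<beta> < 1 / 36" "\<beta> < (p - L)\<^sup>2 / (384 * \<alpha> * p * (p + L)\<^sup>2)"
    and init: "xs 0 \<in> X" "ys 0 \<in> Y"
    and x_step: "\<And>t. xs (Suc t) = closest_point X (xs t - c *\<^sub>R (gx (xs t) (ys t) + p *\<^sub>R (xs t - zs t)))"
    and y_step: "\<And>t. ys (Suc t) = closest_point Y (ys t + \<alpha> *\<^sub>R gy (xs (Suc t)) (ys t))"
    and z_step: "\<And>t. zs (Suc t) = zs t + \<beta> *\<^sub>R (xs (Suc t) - zs t)"
  shows "\<forall>t. let
      yplus = closest_point Y (ys t + \<alpha> *\<^sub>R gy (xmin f p X (ys t) (zs t)) (ys t))
    in phifun f p X Y (xs t) (ys t) (zs t) - phifun f p X Y (xs (Suc t)) (ys (Suc t)) (zs (Suc t))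
       \<ge> 1 / (8 * c) * (norm (xs t - xs (Suc t)))\<^sup>2
         + 1 / (8 * \<alpha>) * (norm (ys t - yplus))\<^sup>2
         + p / (8 * \<beta>) * (norm (zs t - zs (Suc t)))\<^sup>2
         - 24 * p * \<beta> * (norm (xstar f p X Y (zs t) - xmin f p X yplus (zs t)))\<^sup>2"
proof -
  interpret sgda f gx gy X Y L p
    by (rule sgda.intro[OF X Y deriv concave Lpos Lip_x Lip_y p])
  have inv: "xs t \<in> X \<and> ys t \<in> Y" for t
  proof (induction t)
    case 0 then show ?case using init by simp
  next
    case (Suc t)
    have "closest_point X a \<in> X" for a by (rule closest_point_in_set[OF X(2) X(1)])
    moreover have "closest_point Y b \<in> Y" for b by (rule closest_point_in_set[OF compact_imp_closed[OF Y(2)] Y(1)])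
    ultimately show ?case unfolding x_step[of t] y_step[of t] by simp
  qed
  show ?thesis
  proof
    fix t
    show "let yplus = closest_point Y (ys t + \<alpha> *\<^sub>R gy (xmin f p X (ys t) (zs t)) (ys t))
      in phifun f p X Y (xs t) (ys t) (zs t) - phifun f p X Y (xs (Suc t)) (ys (Suc t)) (zs (Suc t))
       \<ge> 1 / (8 * c) * (norm (xs t - xs (Suc t)))\<^sup>2
         + 1 / (8 * \<alpha>) * (norm (ys t - yplus))\<^sup>2
         + p / (8 * \<beta>) * (norm (zs t - zs (Suc t)))\<^sup>2
         - 24 * p * \<beta> * (norm (xstar f p X Y (zs t) - xmin f p X yplus (zs t)))\<^sup>2"
      unfolding Let_def
      using one_step[OF conjunct1[OF inv[of t]] conjunct2[OF inv[of t]] c \<alpha> \<beta>(1,2) x_step[of t] y_step[of t] z_step[of t] refl] .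
  qed
qed

end
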